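(* Consider the one-dimensional conservative forward Euler finite difference scheme $\mathbf{u}_i^{n+1}=\mathbf{u}_i^n-\lambda(\mathbf{f}_{i+1/2}-\mathbf{f}_{i-1/2})$, $\lambda=\Delta t/\Delta x$, with numerical fluxes of the form $\mathbf{f}_{i+1/2}=\alpha_{i+1/2}(\mathbf{w}^+_{i+1/2}-\mathbf{w}^-_{i+1/2})$, where $\mathbf{w}^\pm_{i+1/2}\in\mathbb{R}^6$ are given interface values and $\alpha_{i+1/2}=\max\{\alpha(\mathbf{u}_i^n),\alpha(\mathbf{u}_{i+1}^n)\}$. Let $\mathbf{w}_i^\pm=\mathbf{w}^\pm(\mathbf{u}_i^n)$ and $\mathbf{q}_i^{+,*}=\frac{1}{1-\hat w_N}(\mathbf{w}_i^+-\hat w_N\mathbf{w}^+_{i+1/2})$, $\mathbf{q}_i^{-,*}=\frac{1}{1-\hat w_1}(\mathbf{w}_i^--\hat w_1\mathbf{w}^-_{i-1/2})$. Assume that for all $i$: (1) $\mathbf{u}_i^n\in\mathbb{U}_{\mathrm{ad}}$; (2) $\mathbf{q}_i^{\pm,*}\in\mathbb{U}_{\mathrm{ad}}$ and $\mathbf{w}^\pm_{i+1/2}\in\mathbb{U}_{\mathrm{ad}}$. Then the scheme is positivity preserving, i.e. $\mathbf{u}_i^{n+1}\in\mathbb{U}_{\mathrm{ad}}$ for all $i$, provided the CFL condition $\frac{\alpha\,\Delta t}{\Delta x}\le\hat w_1$ holds, where $\alpha=\max_i\alpha(\mathbf{u}_i^n)$.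
   Context: Ten-Moment equations in 1-D: conservative variable $\mathbf{u}=(\rho,\rho v_1,\rho v_2,E_{11},E_{12},E_{22})^\top$; pressure components $p_{11}=2E_{11}-\rho v_1^2$, $p_{12}=2E_{12}-\rho v_1v_2$, $p_{22}=2E_{22}-\rho v_2^2$; $\mathbb{U}_{\mathrm{ad}}=\{\mathbf{u}:\rho>0,\ \mathbf{p}\text{ positive definite}\}$. Flux $\mathbf{f}(\mathbf{u})=\big(\rho v_1,\ \rho v_1^2+p_{11},\ \rho v_1v_2+p_{12},\ (E_{11}+p_{11})v_1,\ E_{12}v_1+\tfrac12(p_{11}v_2+p_{12}v_1),\ E_{22}v_1+p_{12}v_2\big)^\top$; wave speed $\alpha(\mathbf{u})=|v_1|+\sqrt{3p_{11}/\rho}$; $\mathbf{w}^\pm(\mathbf{u})=\frac12(\mathbf{u}\pm\mathbf{f}(\mathbf{u})/\alpha(\mathbf{u}))$. Uniform mesh with nodes $x_i$, spacing $\Delta x$, interfaces $x_{i+1/2}$. $\hat w_1,\dots,\hat w_N$ are the weights (normalized to sum to $1$ on a cell) of the $N$-point Gauss–Lobatto quadrature rule, $N\ge4$, so that $\hat w_1=\hat w_N$ (for $N=4$, $\hat w_1=1/12$). In the paper $\mathbf{w}^\pm_{i+1/2}=\pm\mathbf{f}^\pm_{i+1/2}/\alpha_{i+1/2}$, where $\mathbf{f}^\pm_{i+1/2}$ are WENO reconstructions of the Lax–Friedrichs split fluxes $\frac12(\mathbf{f}(\mathbf{u})\pm\alpha_{i+1/2}\mathbf{u})$, possibly modified by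 a scaling limiter. *)

theory Defs
  imports Complex_Main
begin

text \<open>States are vectors in R^6, represented as functions nat => real using the
components 0..5: (rho, rho v1, rho v2, E11, E12, E22). Only components 0..5 matter.\<close>

type_synonym vec6 = "nat \<Rightarrow> real"

definition rho :: "vec6 \<Rightarrow> real" where "rho u = u 0"
definition vel1 :: "vec6 \<Rightarrow> real" where "vel1 u = u 1 / u 0"
definition vel2 :: "vec6 \<Rightarrow> real" where "vel2 u = u 2 / u 0"

definition p11 :: "vec6 \<Rightarrow> real" where "p11 u = 2 * u 3 - rho u * vel1 u ^ 2"
definition p12 :: "vec6 \<Rightarrow> real" where "p12 u = 2 * u 4 - rho u * vel1 u * vel2 u"
definition p22 :: "vec6 \<Rightarrow> real" where "p22 u = 2 * u 5 - rho u * vel2 u ^ 2"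

definition pos_def2 :: "real \<Rightarrow> real \<Rightarrow> real \<Rightarrow> bool" where
  "pos_def2 a b c \<longleftrightarrow> (\<forall>x y::real. (x, y) \<noteq> (0, 0) \<longrightarrow> a * x^2 + 2 * b * x * y + c * y^2 > 0)"

definition U_ad :: "vec6 \<Rightarrow> bool" where
  "U_ad u \<longleftrightarrow> rho u > 0 \<and> pos_def2 (p11 u) (p12 u) (p22 u)"

definition flux :: "vec6 \<Rightarrow> vec6" where
  "flux u k =
     (if k = 0 then rho u * vel1 u
      else if k = 1 then rho u * vel1 u ^ 2 + p11 u
      else if k = 2 then rho u * vel1 u * vel2 u + p12 u
      else if k = 3 then (u 3 + p11 u) * vel1 u
      else if k = 4 then u 4 * vel1 u + (p11 u * vel2 u + p12 u * vel1 u) / 2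
      else if k = 5 then u 5 * vel1 u + p12 u * vel2 u
      else 0)"

definition alpha :: "vec6 \<Rightarrow> real" where
  "alpha u = \<bar>vel1 u\<bar> + sqrt (3 * p11 u / rho u)"

definition w_plus :: "vec6 \<Rightarrow> vec6" where
  "w_plus u k = (u k + flux u k / alpha u) / 2"
definition w_minus :: "vec6 \<Rightarrow> vec6" where
  "w_minus u k = (u k - flux u k / alpha u) / 2"

text \<open>Endpoint weights of the N-point Gauss--Lobatto rule, normalised to sum 1 on a cell
 (standard value 2/(N(N-1)) on [-1,1], halved).\<close>
definition gl_w1 :: "nat \<Rightarrow> real" where "gl_w1 N = 1 / (real N * (real N - 1))"
definition gl_wN :: "nat \<Rightarrow> real" where "gl_wN N = 1 / (real N * (real N - 1))"

text \<open>The scheme. u i = u_i^n (i ranges over all integers), wp i = w^+_{i+1/2},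
 wm i = w^-_{i+1/2}.\<close>
definition alpha_half :: "(int \<Rightarrow> vec6) \<Rightarrow> int \<Rightarrow> real" where
  "alpha_half u i = max (alpha (u i)) (alpha (u (i + 1)))"

definition num_flux :: "(int \<Rightarrow> vec6) \<Rightarrow> (int \<Rightarrow> vec6) \<Rightarrow> (int \<Rightarrow> vec6) \<Rightarrow> int \<Rightarrow> vec6" where
  "num_flux u wp wm i k = alpha_half u i * (wp i k - wm i k)"

definition update :: "real \<Rightarrow> real \<Rightarrow> (int \<Rightarrow> vec6) \<Rightarrow> (int \<Rightarrow> vec6) \<Rightarrow> (int \<Rightarrow> vec6) \<Rightarrow> int \<Rightarrow> vec6" where
  "update dt dx u wp wm i k =
     u i k - (dt / dx) * (num_flux u wp wm i k - num_flux u wp wm (i - 1) k)"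

definition q_plus :: "nat \<Rightarrow> (int \<Rightarrow> vec6) \<Rightarrow> (int \<Rightarrow> vec6) \<Rightarrow> int \<Rightarrow> vec6" where
  "q_plus N u wp i k = (w_plus (u i) k - gl_wN N * wp i k) / (1 - gl_wN N)"
definition q_minus :: "nat \<Rightarrow> (int \<Rightarrow> vec6) \<Rightarrow> (int \<Rightarrow> vec6) \<Rightarrow> int \<Rightarrow> vec6" where
  "q_minus N u wm i k = (w_minus (u i) k - gl_w1 N * wm (i - 1) k) / (1 - gl_w1 N)"

end

theory Submission
  imports Defs
begin

definition Qf :: "vec6 \<Rightarrow> real \<Rightarrow> real \<Rightarrow> real" where
  "Qf u x y = 2*(u 3 * x^2 + 2*u 4*x*y + u 5*y^2) - (u 1*x+u 2*y)^2/u 0"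

lemma Qf_eq: "u 0 \<noteq> 0 \<Longrightarrow> p11 u * x^2 + 2*p12 u*x*y + p22 u*y^2 = Qf u x y"
  unfolding Qf_def p11_def p12_def p22_def rho_def vel1_def vel2_def
  by (simp add: field_simps power2_eq_square)

lemma U_ad_iff: "U_ad u \<longleftrightarrow> u 0 > 0 \<and> (\<forall>x y. (x,y) \<noteq> (0,0) \<longrightarrow> Qf u x y > 0)"
  unfolding U_ad_def pos_def2_def using Qf_eq[of u] by (auto simp: rho_def)

lemma titu:
  fixes a b s t :: real
  assumes "a > 0" "b > 0"
  shows "(s+t)^2/(a+b) \<le> s^2/a + t^2/b"
proof -
  have "0 \<le> (s*b - t*a)^2" by simp
  hence "(s+t)^2 * (a*b) \<le> (s^2*b + t^2*a)*(a+b)"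
    by (simp add: power2_eq_square algebra_simps)
  thus ?thesis using assms by (simp add: field_simps)
qed

lemma U_ad_scale: assumes "U_ad a" "c > 0" shows "U_ad (\<lambda>k. c * a k)"
proof -
  have h: "Qf (\<lambda>k. c * a k) x y = c * Qf a x y" for x y
    using assms unfolding Qf_def U_ad_iff
    by (simp add: field_simps power2_eq_square)
  show ?thesis using assms unfolding U_ad_iff h by auto
qed

lemma U_ad_add: assumes "U_ad a" "U_ad b" shows "U_ad (\<lambda>k. a k + b k)"
proof -
  have a0: "a 0 > 0" and b0: "b 0 > 0" using assms U_ad_iff by auto
  have h: "Qf (\<lambda>k. a k + b k) x y \<ge> Qf a x y + Qf b x y" for x y
  proof -
    have "(a 1*x+a 2*y + (b 1*x+b 2*y))^2/(a 0 + b 0)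
       \<le> (a 1*x+a 2*y)^2/a 0 + (b 1*x+b 2*y)^2/b 0" by (rule titu[OF a0 b0])
    thus ?thesis unfolding Qf_def by (simp add: algebra_simps)
  qed
  show ?thesis using assms a0 b0 unfolding U_ad_iff
    by (smt (verit) h)
qed

lemma U_ad_addc: assumes "U_ad a" "U_ad b" "c \<ge> 0" shows "U_ad (\<lambda>k. a k + c * b k)"
proof (cases "c = 0")
  case True thus ?thesis using assms(1) by simp
next
  case False thus ?thesis using U_ad_add[OF assms(1) U_ad_scale[OF assms(2)]] assms(3) by simp
qed

lemma alpha_nonneg: assumes "U_ad u" shows "alpha u \<ge> 0"
proof -
  have "p11 u * 1^2 + 2 * p12 u * 1 * 0 + p22 u * 0^2 > 0"
    using assms unfolding U_ad_def pos_def2_def by (metis one_neq_zero prod.inject)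
  hence "p11 u > 0" by simp
  moreover have "rho u > 0" using assms U_ad_def by auto
  ultimately show ?thesis unfolding alpha_def by simp
qed

theorem theorem3:
  fixes u wp wm :: "int \<Rightarrow> vec6" and N :: nat and dt dx :: real
  assumes "N \<ge> 4" and "dt > 0" and "dx > 0"
    and "\<forall>i. U_ad (u i)"
    and "\<forall>i. U_ad (q_plus N u wp i) \<and> U_ad (q_minus N u wm i)"
    and "\<forall>i. U_ad (wp i) \<and> U_ad (wm i)"
    and "bdd_above (range (\<lambda>i. alpha (u i)))"
    and "(SUP i. alpha (u i)) * dt / dx \<le> gl_w1 N"
  shows "\<forall>i. U_ad (update dt dx u wp wm i)"
proof
  fix i
  define c where "c = gl_w1 N"
  define A where "A = (SUP i. alpha (u i))"
  define l where "l = dt / dx"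
  define ap where "ap = alpha_half u i"
  define am where "am = alpha_half u (i-1)"
  have l0: "l > 0" using assms by (simp add: l_def)
  have NN: "real N \<ge> 4" using assms(1) by simp
  have c1: "c < 1" "c > 0"
  proof -
    have "real N * (real N - 1) \<ge> 4 * 3" using NN by (intro mult_mono) auto
    thus "c < 1" "c > 0" unfolding c_def gl_w1_def by auto
  qed
  have up: "alpha (u j) \<le> A" for j unfolding A_def by (rule cSUP_upper[OF _ assms(7)]) simp
  have lA: "l * A \<le> c" using assms(8) unfolding c_def A_def l_def by (simp add: mult.commute)
  have ap1: "0 \<le> ap" "ap \<le> A" unfolding ap_def alpha_half_def
    using up alpha_nonneg assms(4) by (auto simp: le_max_iff_disj)
  have am1: "0 \<le> am" "am \<le> A" unfolding am_def alpha_half_def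
    using up alpha_nonneg assms(4) by (auto simp: le_max_iff_disj)
  have lap: "l * ap \<le> c" "l * ap \<ge> 0"
    proof -
    have "l * ap \<le> l * A" using mult_left_mono[OF ap1(2), of l] l0 by simp
    thus "l * ap \<le> c" using lA by simp
    show "l * ap \<ge> 0" using l0 ap1 by simp
  qed
  have lam: "l * am \<le> c" "l * am \<ge> 0"
    proof -
    have "l * am \<le> l * A" using mult_left_mono[OF am1(2), of l] l0 by simp
    thus "l * am \<le> c" using lA by simp
    show "l * am \<ge> 0" using l0 am1 by simp
  qed
  define qp where "qp = q_plus N u wp i"
  define qm where "qm = q_minus N u wm i"
  have s1: "U_ad (\<lambda>k. (1-c) * qp k)" using U_ad_scale assms(5) c1 qp_def by auto
  have s2: "U_ad (\<lambda>k. (1-c) * qp k + (c - l*ap) * wp i k)"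
    using U_ad_addc[OF s1, of "wp i" "c - l*ap"] assms(6) lap by auto
  have s3: "U_ad (\<lambda>k. ((1-c) * qp k + (c - l*ap) * wp i k) + (1-c) * qm k)"
    using U_ad_addc[OF s2, of qm "1-c"] assms(5) c1 qm_def by auto
  have s4: "U_ad (\<lambda>k. (((1-c) * qp k + (c - l*ap) * wp i k) + (1-c) * qm k) + (c - l*am) * wm (i-1) k)"
    using U_ad_addc[OF s3, of "wm (i-1)" "c - l*am"] assms(6) lam by auto
  have s5: "U_ad (\<lambda>k. ((((1-c) * qp k + (c - l*ap) * wp i k) + (1-c) * qm k) + (c - l*am) * wm (i-1) k) + (l*ap) * wm i k)"
    using U_ad_addc[OF s4, of "wm i" "l*ap"] assms(6) lap by auto
  have s6: "U_ad (\<lambda>k. (((((1-c) * qp k + (c - l*ap) * wp i k) + (1-c) * qm k) + (c - l*am) * wm (i-1) k) + (l*ap) * wm i k) + (l*am) * wp (i-1) k)"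
    using U_ad_addc[OF s5, of "wp (i-1)" "l*am"] assms(6) lam by auto
  have eq: "update dt dx u wp wm i = (\<lambda>k. (((((1-c) * qp k + (c - l*ap) * wp i k) + (1-c) * qm k) + (c - l*am) * wm (i-1) k) + (l*ap) * wm i k) + (l*am) * wp (i-1) k)"
  proof
    fix k
    have wpm: "w_plus (u i) k + w_minus (u i) k = u i k" unfolding w_plus_def w_minus_def by (simp add: field_simps)
    have e1: "(1-c) * qp k = w_plus (u i) k - c * wp i k"
      unfolding qp_def q_plus_def gl_wN_def using c1 by (simp add: c_def gl_w1_def)
    have e2: "(1-c) * qm k = w_minus (u i) k - c * wm (i-1) k"
      unfolding qm_def q_minus_def using c1 by (simp add: c_def)
    show "update dt dx u wp wm i k = (((((1-c) * qp k + (c - l*ap) * wp i k) + (1-c) * qm k) + (c - l*am) * wm (i-1) k) + (l*ap) * wm i k) + (l*am) * wp (i-1) k"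
      unfolding update_def num_flux_def e1 e2 ap_def[symmetric] l_def[symmetric]
      using wpm by (simp add: am_def algebra_simps)
  qed
  show "U_ad (update dt dx u wp wm i)" unfolding eq by (rule s6)
qed

end
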